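(* Let $L$ be an infinite set and let $Q$ be either the edgeless cube $Q_L$ or the edged cube $\bar Q_L$. If $f_0$ is an illegal configuration, then for every basic sequence, its terminal configuration when applied to $f_0$ is illegal; i.e., no legal configuration is accessible from an illegal one.
   Context: Let $L$ be an infinite set, $-L=\{-r:r\in L\}$ a disjoint copy of $L$, and $0$ a new element; $L^\dagger=-L\cup\{0\}\cup L$ with $-(-r)=r$, $-0=0$. Adjoin $\pm\infty$ with $-(+\infty)=-\infty$ and set $\bar L^\dagger=L^\dagger\cup\{\pm\infty\}$. Points of $U=(\bar L^\dagger)^3$ have coordinates $x,y,z$. The edgeless cube $Q_L$ is the set of points of $U$ with exactly one coordinate in $\{\pm\infty\}$ (cells). The edged cube $\bar Q_L$ is the set of cells $(p,i)$ with $p\in U$, $i\in\{x,y,z\}$, $p_i\in\{\pm\infty\}$ ($i$ marks the face). For $i\in\{x,y,z\}$, $\alpha\in\bar L^\dagger$, the quarter-turn twist $T_{i,\alpha}$ is the permutation of cells fixing every cell whose point $p$ has $p_i\ne\alpha$ and acting on the others by $T_{x,\alpha}(\alpha,y,z)=(\alpha,-z,y)$, $T_{y,\alpha}(x,\alpha,z)=(z,\alpha,-x)$, $T_{z,\alpha}(x,y,\alpha)=(-y,x,\alpha)$ (in $\bar Q_L$ the marked coordinate is carried along by the rotation). Basic twists are $T,T^2,T^3$ for quarter-turn twists $T$. A basic sequence is a sequence $\langle\sigma_\eta:\eta<\theta\rangle$ of basic twists of ordinal length $\theta$. A configuration is a map $f$ from cells to the six colors red, white, green, orange, yellow, blue together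 with a special value NaC; it is legal if it never takes value NaC and illegal otherwise. A twist $\sigma$ acts by $(\sigma f)(c)=f(\sigma^{-1}c)$. Applying $\langle\sigma_\eta:\eta<\theta\rangle$ to $f_0$ produces $f_{\eta+1}=\sigma_\eta f_\eta$, and for limit $\lambda\le\theta$, $f_\lambda(c)$ is the eventually constant value of $f_\eta(c)$ ($\eta<\lambda$) if it exists and NaC otherwise; $f_\theta$ is the terminal configuration. $f$ is accessible from $f_0$ if it is the terminal configuration of some basic sequence applied to $f_0$. *)

theory Defs
  imports Main
begin

text \<open>Elements of the extended set: L-dagger together with plus/minus infinity.
  L is represented by a type 'l (assumed infinite in the theorem).\<close>
datatype 'l coord = Neg 'l | Zero | Pos 'l | PInf | NInf

fun cneg :: "'l coord \<Rightarrow> 'l coord" where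
  "cneg (Neg r) = Pos r"
| "cneg Zero = Zero"
| "cneg (Pos r) = Neg r"
| "cneg PInf = NInf"
| "cneg NInf = PInf"

definition is_inf :: "'l coord \<Rightarrow> bool" where
  "is_inf a \<longleftrightarrow> a = PInf \<or> a = NInf"

type_synonym 'l point = "'l coord \<times> 'l coord \<times> 'l coord"

datatype axis = AX | AY | AZ

fun pcoord :: "'l point \<Rightarrow> axis \<Rightarrow> 'l coord" where
  "pcoord (x, y, z) AX = x"
| "pcoord (x, y, z) AY = y"
| "pcoord (x, y, z) AZ = z"

definition edgeless_cells :: "'l point set" where
  "edgeless_cells = {p. card {i. is_inf (pcoord p i)} = 1}"

definition edged_cells :: "('l point \<times> axis) set" where
  "edged_cells = {(p, i). is_inf (pcoord p i)}"

fun rot :: "axis \<Rightarrow> 'l point \<Rightarrow> 'l point" where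
  "rot AX (x, y, z) = (x, cneg z, y)"
| "rot AY (x, y, z) = (z, y, cneg x)"
| "rot AZ (x, y, z) = (cneg y, x, z)"

definition twist_pt :: "axis \<Rightarrow> 'l coord \<Rightarrow> 'l point \<Rightarrow> 'l point" where
  "twist_pt i \<alpha> p = (if pcoord p i = \<alpha> then rot i p else p)"

text \<open>How the rotation about axis i carries the marked coordinate.\<close>
fun rot_axis :: "axis \<Rightarrow> axis \<Rightarrow> axis" where
  "rot_axis AX AX = AX" | "rot_axis AX AY = AZ" | "rot_axis AX AZ = AY"
| "rot_axis AY AX = AZ" | "rot_axis AY AY = AY" | "rot_axis AY AZ = AX"
| "rot_axis AZ AX = AY" | "rot_axis AZ AY = AX" | "rot_axis AZ AZ = AZ"

definition twist_edged :: "axis \<Rightarrow> 'l coord \<Rightarrow> ('l point \<times> axis) \<Rightarrow> ('l point \<times> axis)" where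
  "twist_edged i \<alpha> c = (if pcoord (fst c) i = \<alpha> then (rot i (fst c), rot_axis i (snd c)) else c)"

definition basic_edgeless :: "('l point \<Rightarrow> 'l point) set" where
  "basic_edgeless = {(twist_pt i \<alpha>) ^^ k | i \<alpha> k. k \<in> {1, 2, 3::nat}}"

definition basic_edged :: "(('l point \<times> axis) \<Rightarrow> ('l point \<times> axis)) set" where
  "basic_edged = {(twist_edged i \<alpha>) ^^ k | i \<alpha> k. k \<in> {1, 2, 3::nat}}"

datatype color = Red | White | Green | Orange | Yellow | Blue

text \<open>Configurations: None plays the role of NaC.\<close>
type_synonym 'c config = "'c \<Rightarrow> color option"

definition legal :: "'c set \<Rightarrow> 'c config \<Rightarrow> bool" where
  "legal Cells f \<longleftrightarrow> (\<forall>c\<in>Cells. f c \<noteq> None)"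

definition act :: "('c \<Rightarrow> 'c) \<Rightarrow> 'c config \<Rightarrow> 'c config" where
  "act \<sigma> f = (\<lambda>c. f (inv \<sigma> c))"

text \<open>Ordinals are represented by elements of a well-ordered type 'o;
  the successor of \<eta> is the least element above \<eta>, limits are elements that are
  neither least nor successors.\<close>
definition osucc :: "'o::wellorder \<Rightarrow> 'o" where
  "osucc \<eta> = (LEAST \<zeta>. \<eta> < \<zeta>)"

definition is_limit :: "'o::wellorder \<Rightarrow> bool" where
  "is_limit lam \<longleftrightarrow> (\<exists>\<zeta>. \<zeta> < lam) \<and> (\<forall>\<zeta><lam. \<exists>\<xi>. \<zeta> < \<xi> \<and> \<xi> < lam)"

definition eventually_const :: "'o::wellorder \<Rightarrow> ('o \<Rightarrow> 'a) \<Rightarrow> 'a \<Rightarrow> bool" where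
  "eventually_const lam g v \<longleftrightarrow> (\<exists>\<eta>0<lam. \<forall>\<eta>. \<eta>0 \<le> \<eta> \<and> \<eta> < lam \<longrightarrow> g \<eta> = v)"

definition is_run :: "('o::wellorder \<Rightarrow> 'c \<Rightarrow> 'c) \<Rightarrow> 'o \<Rightarrow> 'c config \<Rightarrow> ('o \<Rightarrow> 'c config) \<Rightarrow> bool" where
  "is_run \<sigma> \<theta> f0 F \<longleftrightarrow>
     (\<forall>\<eta>. (\<forall>\<zeta>. \<not> \<zeta> < \<eta>) \<longrightarrow> F \<eta> = f0) \<and>
     (\<forall>\<eta><\<theta>. F (osucc \<eta>) = act (\<sigma> \<eta>) (F \<eta>)) \<and>
     (\<forall>lam\<le>\<theta>. is_limit lam \<longrightarrow>
        (\<forall>c. F lam c = (if \<exists>v. eventually_const lam (\<lambda>\<eta>. F \<eta> c) v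
                       then (THE v. eventually_const lam (\<lambda>\<eta>. F \<eta> c) v) else None)))"

end

theory Submission
  imports Defs
begin

lemma run_keeps_nac:
  fixes \<sigma> :: "'o::wellorder \<Rightarrow> 'c \<Rightarrow> 'c"
  assumes run: "is_run \<sigma> \<theta> f0 F" and fin: "finite K" and c0: "c0 \<in> K" "f0 c0 = None"
    and maps: "\<forall>\<eta><\<theta>. inj (\<sigma> \<eta>) \<and> \<sigma> \<eta> ` K \<subseteq> K"
  shows "\<eta> \<le> \<theta> \<Longrightarrow> \<exists>c\<in>K. F \<eta> c = None"
proof (induction \<eta> rule: less_induct)
  case (less \<eta>)
  have base: "\<forall>\<eta>. (\<forall>\<zeta>. \<not> \<zeta> < \<eta>) \<longrightarrow> F \<eta> = f0"
    and succ: "\<forall>\<eta><\<theta>. F (osucc \<eta>) = act (\<sigma> \<eta>) (F \<eta>)"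
    and lim: "\<forall>lam\<le>\<theta>. is_limit lam \<longrightarrow>
        (\<forall>c. F lam c = (if \<exists>v. eventually_const lam (\<lambda>\<eta>. F \<eta> c) v
                       then (THE v. eventually_const lam (\<lambda>\<eta>. F \<eta> c) v) else None))"
    using run unfolding is_run_def by blast+
  show ?case
  proof (cases "\<forall>\<zeta>. \<not> \<zeta> < \<eta>")
    case True
    then show ?thesis using base c0 by auto
  next
    case nl: False
    show ?thesis
    proof (cases "is_limit \<eta>")
      case False
      then obtain \<zeta> where z: "\<zeta> < \<eta>" "\<forall>\<xi>. \<zeta> < \<xi> \<longrightarrow> \<not> \<xi> < \<eta>"
        using nl unfolding is_limit_def by auto
      have os: "osucc \<zeta> = \<eta>"
        unfolding osucc_def
        by (rule Least_equality) (use z in \<open>auto simp: not_less\<close>)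
      have zt: "\<zeta> < \<theta>" using z less.prems by auto
      have zle: "\<zeta> \<le> \<theta>" using zt by simp
      obtain d where d: "d \<in> K" "F \<zeta> d = None" using less.IH[OF z(1) zle] by auto
      have "F \<eta> (\<sigma> \<zeta> d) = None"
        using succ zt os d maps by (auto simp: act_def)
      then show ?thesis using maps zt d by blast
    next
      case True
      show ?thesis
      proof (rule ccontr)
        assume "\<not> (\<exists>c\<in>K. F \<eta> c = None)"
        hence nn: "\<forall>c\<in>K. F \<eta> c \<noteq> None" by auto
        have "\<forall>c\<in>K. \<exists>e. e < \<eta> \<and> (\<forall>x. e \<le> x \<and> x < \<eta> \<longrightarrow> F x c \<noteq> None)"
        proof
          fix c assume "c \<in> K"
          hence ne: "F \<eta> c \<noteq> None" using nn by auto
          have eq: "F \<eta> c = (if \<exists>v. eventually_const \<eta> (\<lambda>\<eta>. F \<eta> c) v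
                       then (THE v. eventually_const \<eta> (\<lambda>\<eta>. F \<eta> c) v) else None)"
            using lim True less.prems by blast
          then obtain v where v: "eventually_const \<eta> (\<lambda>\<eta>. F \<eta> c) v" using ne by (auto split: if_splits)
          have uniq: "\<And>w. eventually_const \<eta> (\<lambda>\<eta>. F \<eta> c) w \<Longrightarrow> w = v"
          proof -
            fix w assume w: "eventually_const \<eta> (\<lambda>\<eta>. F \<eta> c) w"
            obtain a where a: "a < \<eta>" "\<forall>x. a \<le> x \<and> x < \<eta> \<longrightarrow> F x c = v"
              using v unfolding eventually_const_def by auto
            obtain b where b: "b < \<eta>" "\<forall>x. b \<le> x \<and> x < \<eta> \<longrightarrow> F x c = w"
              using w unfolding eventually_const_def by auto
            have m1: "a \<le> max a b" "b \<le> max a b" "max a b < \<eta>" using a b by auto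
            have "F (max a b) c = v" "F (max a b) c = w" using a(2) b(2) m1 by blast+
            thus "w = v" by simp
          qed
          have th: "(THE v. eventually_const \<eta> (\<lambda>\<eta>. F \<eta> c) v) = v"
            using v uniq by (rule the_equality)
          have "F \<eta> c = v" using eq th v by (metis (mono_tags, lifting))
          hence vn: "v \<noteq> None" using ne by simp
          obtain a where a: "a < \<eta>" "\<forall>x. a \<le> x \<and> x < \<eta> \<longrightarrow> F x c = v"
            using v unfolding eventually_const_def by auto
          thus "\<exists>e. e < \<eta> \<and> (\<forall>x. e \<le> x \<and> x < \<eta> \<longrightarrow> F x c \<noteq> None)" using vn by auto
        qed
        then obtain g where g: "\<forall>c\<in>K. g c < \<eta> \<and> (\<forall>x. g c \<le> x \<and> x < \<eta> \<longrightarrow> F x c \<noteq> None)"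
          by metis
        define m where "m = Max (g ` K)"
        have mK: "m \<in> g ` K" unfolding m_def using fin c0 by (intro Max_in) auto
        hence ml: "m < \<eta>" using g by auto
        have ge: "\<forall>c\<in>K. g c \<le> m" unfolding m_def using fin by auto
        obtain c where "c \<in> K" "F m c = None" using less.IH[OF ml] less_imp_le[OF less_le_trans[OF ml less.prems]] by blast
        thus False using g ge ml by blast
      qed
    qed
  qed
qed

lemma is_inf_cneg[simp]: "is_inf (cneg a) = is_inf a"
  by (cases a) (auto simp: is_inf_def)

lemma cneg_cneg[simp]: "cneg (cneg a) = a"
  by (cases a) auto

lemma rot_axis_invol[simp]: "rot_axis i (rot_axis i j) = j"
  by (cases i; cases j) auto

lemma inf_rot: "is_inf (pcoord (rot i p) (rot_axis i j)) = is_inf (pcoord p j)"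
  by (cases p; cases i; cases j) auto

lemma rot_fix: "pcoord (rot i p) i = pcoord p i"
proof -
  obtain a b c where "p = (a, b, c)" by (cases p) auto
  thus ?thesis by (cases i) auto
qed

lemma inj_rot: "inj (rot i)"
proof (rule injI)
  fix p q assume "rot i p = rot i q"
  thus "p = q"
    by (cases p; cases q; cases i) (auto dest: arg_cong[of _ _ cneg])
qed

lemma inf_set_rot: "{j. is_inf (pcoord (rot i p) j)} = rot_axis i ` {j. is_inf (pcoord p j)}"
proof -
  have h: "\<And>j. is_inf (pcoord (rot i p) j) = is_inf (pcoord p (rot_axis i j))"
    using inf_rot[of i p] by (metis rot_axis_invol)
  show ?thesis
  proof (intro set_eqI iffI)
    fix x assume "x \<in> {j. is_inf (pcoord (rot i p) j)}"
    hence "rot_axis i x \<in> {j. is_inf (pcoord p j)}" using h by simp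
    moreover have "x = rot_axis i (rot_axis i x)" by simp
    ultimately show "x \<in> rot_axis i ` {j. is_inf (pcoord p j)}" by blast
  next
    fix x assume "x \<in> rot_axis i ` {j. is_inf (pcoord p j)}"
    then obtain y where "x = rot_axis i y" "is_inf (pcoord p y)" by blast
    thus "x \<in> {j. is_inf (pcoord (rot i p) j)}" using h[of x] by simp
  qed
qed

lemma inj_rot_axis: "inj (rot_axis i)"
  by (metis injI rot_axis_invol)

lemma rot_cells: "p \<in> edgeless_cells \<Longrightarrow> rot i p \<in> edgeless_cells"
  unfolding edgeless_cells_def
  by (simp add: inf_set_rot card_image inj_on_subset[OF inj_rot_axis])

lemma inj_twist_pt: "inj (twist_pt i \<alpha>)"
proof (rule injI)
  fix p q assume "twist_pt i \<alpha> p = twist_pt i \<alpha> q"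
  thus "p = q" unfolding twist_pt_def using rot_fix[of i p] rot_fix[of i q] inj_rot[of i]
    by (auto split: if_splits dest: injD)
qed

lemma inj_twist_edged: "inj (twist_edged i \<alpha>)"
proof (rule injI)
  fix p q assume e: "twist_edged i \<alpha> p = twist_edged i \<alpha> q"
  obtain a j where p: "p = (a, j)" by (cases p)
  obtain b k where q: "q = (b, k)" by (cases q)
  have "rot i a = rot i b \<Longrightarrow> a = b" using inj_rot[of i] by (meson injD)
  moreover have "rot_axis i j = rot_axis i k \<Longrightarrow> j = k" by (metis rot_axis_invol)
  ultimately show "p = q" using e rot_fix[of i a] rot_fix[of i b] unfolding p q twist_edged_def
    by (auto split: if_splits)
qed

lemma rot_A: "cneg ` A \<subseteq> A \<Longrightarrow> p \<in> A \<times> A \<times> A \<Longrightarrow> rot i p \<in> A \<times> A \<times> A"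
proof -
  assume a: "cneg ` A \<subseteq> A" "p \<in> A \<times> A \<times> A"
  obtain x y z where "p = (x, y, z)" by (cases p) auto
  thus ?thesis using a by (cases i) auto
qed


lemma funpow_into: "f ` K \<subseteq> K \<Longrightarrow> (f ^^ k) ` K \<subseteq> K"
  by (induction k) auto

lemma finite_axis: "finite (UNIV :: axis set)"
proof -
  have "UNIV = {AX, AY, AZ}" by (auto intro: axis.exhaust)
  moreover have "finite {AX, AY, AZ}" by simp
  ultimately show ?thesis by metis
qed

theorem mainTheorem18:
  assumes "infinite (UNIV :: 'l set)"
  shows
   "(\<forall>(\<sigma> :: 'o::wellorder \<Rightarrow> 'l point \<Rightarrow> 'l point) \<theta> f0 F.
       (\<forall>\<eta><\<theta>. \<sigma> \<eta> \<in> basic_edgeless) \<and> \<not> legal edgeless_cells f0 \<and> is_run \<sigma> \<theta> f0 F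
       \<longrightarrow> \<not> legal edgeless_cells (F \<theta>)) \<and>
    (\<forall>(\<sigma> :: 'o \<Rightarrow> ('l point \<times> axis) \<Rightarrow> ('l point \<times> axis)) \<theta> f0 F.
       (\<forall>\<eta><\<theta>. \<sigma> \<eta> \<in> basic_edged) \<and> \<not> legal edged_cells f0 \<and> is_run \<sigma> \<theta> f0 F
       \<longrightarrow> \<not> legal edged_cells (F \<theta>))"
proof (intro conjI allI impI; elim conjE)
  fix \<sigma> :: "'o::wellorder \<Rightarrow> 'l point \<Rightarrow> 'l point" and \<theta> f0 F
  assume bs: "\<forall>\<eta><\<theta>. \<sigma> \<eta> \<in> basic_edgeless" and il: "\<not> legal edgeless_cells f0"
    and run: "is_run \<sigma> \<theta> f0 F"
  obtain c0 where c0: "c0 \<in> edgeless_cells" "f0 c0 = None" using il unfolding legal_def by auto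
  obtain x y z where xyz: "c0 = (x, y, z)" by (cases c0) auto
  define A where "A = {x, y, z, cneg x, cneg y, cneg z}"
  have cA: "cneg ` A \<subseteq> A" unfolding A_def by auto
  define K where "K = edgeless_cells \<inter> (A \<times> A \<times> A)"
  have finK: "finite K" unfolding K_def A_def by auto
  have c0K: "c0 \<in> K" unfolding K_def A_def using c0 xyz by auto
  have tw: "twist_pt i \<alpha> ` K \<subseteq> K" for i \<alpha>
  proof
    fix q assume "q \<in> twist_pt i \<alpha> ` K"
    then obtain p where p: "p \<in> K" "q = twist_pt i \<alpha> p" by auto
    show "q \<in> K"
    proof (cases "pcoord p i = \<alpha>")
      case True
      hence "q = rot i p" using p(2) unfolding twist_pt_def by simp
      thus ?thesis using p(1) rot_cells[of p i] rot_A[OF cA, of p i] unfolding K_def by blast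
    next
      case False
      hence "q = p" using p(2) unfolding twist_pt_def by simp
      thus ?thesis using p(1) by simp
    qed
  qed
  have all: "\<forall>s\<in>(basic_edgeless :: ('l point \<Rightarrow> 'l point) set). inj s \<and> s ` K \<subseteq> K"
  proof
    fix s :: "'l point \<Rightarrow> 'l point" assume "s \<in> basic_edgeless"
    then obtain i \<alpha> k where "s = twist_pt i \<alpha> ^^ k" unfolding basic_edgeless_def by blast
    thus "inj s \<and> s ` K \<subseteq> K" using inj_fn[OF inj_twist_pt] funpow_into[OF tw] by simp
  qed
  have maps: "\<forall>\<eta><\<theta>. inj (\<sigma> \<eta>) \<and> \<sigma> \<eta> ` K \<subseteq> K"
    using bs all by blast
  obtain c where "c \<in> K" "F \<theta> c = None"
    using run_keeps_nac[OF run finK c0K c0(2) maps, of \<theta>] by auto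
  thus "\<not> legal edgeless_cells (F \<theta>)" unfolding legal_def K_def by auto
next
  fix \<sigma> :: "'o::wellorder \<Rightarrow> ('l point \<times> axis) \<Rightarrow> ('l point \<times> axis)" and \<theta> f0 F
  assume bs: "\<forall>\<eta><\<theta>. \<sigma> \<eta> \<in> basic_edged" and il: "\<not> legal edged_cells f0"
    and run: "is_run \<sigma> \<theta> f0 F"
  obtain c0 where c0: "c0 \<in> edged_cells" "f0 c0 = None" using il unfolding legal_def by auto
  obtain x y z j where xyz: "c0 = ((x, y, z), j)" by (cases c0) auto
  define A where "A = {x, y, z, cneg x, cneg y, cneg z}"
  have cA: "cneg ` A \<subseteq> A" unfolding A_def by auto
  define K where "K = edged_cells \<inter> ((A \<times> A \<times> A) \<times> UNIV)"
  have finK: "finite K" unfolding K_def A_def using finite_axis by auto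
  have c0K: "c0 \<in> K" unfolding K_def A_def using c0 xyz by auto
  have tw: "twist_edged i \<alpha> ` K \<subseteq> K" for i \<alpha>
  proof
    fix q assume "q \<in> twist_edged i \<alpha> ` K"
    then obtain p k where p: "(p, k) \<in> K" "q = twist_edged i \<alpha> (p, k)" by auto
    show "q \<in> K"
    proof (cases "pcoord p i = \<alpha>")
      case True
      hence "q = (rot i p, rot_axis i k)" using p(2) unfolding twist_edged_def by simp
      thus ?thesis using p(1) inf_rot[of i p k] rot_A[OF cA, of p i]
        unfolding K_def edged_cells_def by blast
    next
      case False
      hence "q = (p, k)" using p(2) unfolding twist_edged_def by simp
      thus ?thesis using p(1) by simp
    qed
  qed
  have all: "\<forall>s\<in>(basic_edged :: (('l point \<times> axis) \<Rightarrow> ('l point \<times> axis)) set). inj s \<and> s ` K \<subseteq> K"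
  proof
    fix s :: "'l point \<times> axis \<Rightarrow> 'l point \<times> axis" assume "s \<in> basic_edged"
    then obtain i \<alpha> k where "s = twist_edged i \<alpha> ^^ k" unfolding basic_edged_def by blast
    thus "inj s \<and> s ` K \<subseteq> K" using inj_fn[OF inj_twist_edged] funpow_into[OF tw] by simp
  qed
  have maps: "\<forall>\<eta><\<theta>. inj (\<sigma> \<eta>) \<and> \<sigma> \<eta> ` K \<subseteq> K"
    using bs all by blast
  obtain c where "c \<in> K" "F \<theta> c = None"
    using run_keeps_nac[OF run finK c0K c0(2) maps, of \<theta>] by auto
  thus "\<not> legal edged_cells (F \<theta>)" unfolding legal_def K_def by auto
qed

end
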